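(* Let $S=\{(a_i,b_i)\}_{i=1}^n\subset\mathbb R_{>0}\times\mathbb R_{\ge0}$ with $0<a_1<\cdots<a_n$, and let $f\in\mathbb R_{\ge0}[X]$ interpolate $S$ (i.e. $f(a_i)=b_i$ for all $i$). (1) If $\mathfrak d(f)+1\le n$, then $f$ is the unique polynomial in $\mathbb R_{\ge0}[X]$ interpolating $S$. (2) If $n\le\mathfrak d(f)$, then there are infinitely many polynomials in $\mathbb R_{\ge0}[X]$ interpolating $S$.
   Context: $\mathbb R_{\ge0}[X]$ is the set of real polynomials all of whose coefficients are nonnegative (CMPs). A finite sign sequence is $s=(s_i)_{i\in\omega}\in\{-,0,+\}^\omega$ with finitely many nonzero entries ($\omega=\{0,1,2,\dots\}$); $\mathscr S$ is their set and $\mathscr S_+=\mathscr S\cap\{0,+\}^\omega$. For $f=\sum_i c_iX^i$, $\mathrm{Sign}(f)=(\operatorname{sign}(c_i))_{i\in\omega}$. $\mathrm{SC}(t)$ is the number of pairs $i<j$ with $\{t_i,t_j\}=\{-,+\}$ and $t_k=0$ for all $i<k<j$. For $s\in\mathscr S_+$, $\mathfrak d(s)=\max\{\mathrm{SC}(t): t\in\mathscr S,\ t_i\in\{-,0,s_i\}\ \forall i\in\omega\}$, and for $f\in\mathbb R_{\ge0}[X]$, $\mathfrak d(f)=\mathfrak d(\mathrm{Sign}(f))$. *)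

theory Defs
  imports "HOL-Computational_Algebra.Polynomial"
begin

text \<open>Signs are encoded as integers: -1 for minus, 0 for zero, 1 for plus.
  A finite sign sequence is a function nat => int with values in {-1,0,1}
  and finitely many nonzero entries.\<close>

definition sign_seqs :: "(nat \<Rightarrow> int) set" where
  "sign_seqs = {t. (\<forall>i. t i \<in> {-1, 0, 1}) \<and> finite {i. t i \<noteq> 0}}"

definition sign_seqs_plus :: "(nat \<Rightarrow> int) set" where
  "sign_seqs_plus = {t \<in> sign_seqs. \<forall>i. t i \<in> {0, 1}}"

definition Sign :: "real poly \<Rightarrow> nat \<Rightarrow> int" where
  "Sign f = (\<lambda>i. if coeff f i > 0 then 1 else if coeff f i < 0 then -1 else 0)"

definition SC :: "(nat \<Rightarrow> int) \<Rightarrow> nat" where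
  "SC t = card {(i, j). i < j \<and> {t i, t j} = {-1, 1} \<and> (\<forall>k. i < k \<and> k < j \<longrightarrow> t k = 0)}"

definition dfrak :: "(nat \<Rightarrow> int) \<Rightarrow> nat" where
  "dfrak s = Max {SC t | t. t \<in> sign_seqs \<and> (\<forall>i. t i \<in> {-1, 0, s i})}"

definition dfrak_poly :: "real poly \<Rightarrow> nat" where
  "dfrak_poly f = dfrak (Sign f)"

definition CMP :: "real poly \<Rightarrow> bool" where
  "CMP f \<longleftrightarrow> (\<forall>i. coeff f i \<ge> 0)"

end

theory Submission
  imports Defs
begin


definition PS :: "(nat \<Rightarrow> int) \<Rightarrow> (nat \<times> nat) set" where
  "PS t = {(i, j). i < j \<and> {t i, t j} = {-1, 1} \<and> (\<forall>k. i < k \<and> k < j \<longrightarrow> t k = 0)}"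

definition supp :: "(nat \<Rightarrow> int) \<Rightarrow> nat set" where
  "supp t = {i. t i \<noteq> 0}"

lemma SC_PS: "SC t = card (PS t)"
  unfolding SC_def PS_def by simp

lemma pair_iff: "{a, b} = {-1, 1::int} \<longleftrightarrow> (a = 1 \<and> b = -1) \<or> (a = -1 \<and> b = 1)"
  by (auto simp: doubleton_eq_iff)

lemma PS_mem: "(i, j) \<in> PS t \<longleftrightarrow> i < j \<and> ((t i = 1 \<and> t j = -1) \<or> (t i = -1 \<and> t j = 1)) \<and> (\<forall>k. i < k \<and> k < j \<longrightarrow> t k = 0)"
  unfolding PS_def using pair_iff by auto

lemma PS_nz: "(i, j) \<in> PS t \<Longrightarrow> t i \<noteq> 0 \<and> t j \<noteq> 0 \<and> t j = - t i \<and> i < j"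
  unfolding PS_mem by auto

lemma PS_fin: "finite (supp t) \<Longrightarrow> finite (PS t)"
proof -
  assume "finite (supp t)"
  moreover have "PS t \<subseteq> supp t \<times> supp t" using PS_nz unfolding supp_def by fastforce
  ultimately show ?thesis by (meson finite_SigmaI finite_subset)
qed

lemma PS_uniq1: "(i, j) \<in> PS t \<Longrightarrow> (i, j') \<in> PS t \<Longrightarrow> j = j'"
  unfolding PS_mem by (metis linorder_neqE_nat zero_neq_neg_one zero_neq_one)

lemma PS_uniq2: "(i, j) \<in> PS t \<Longrightarrow> (i', j) \<in> PS t \<Longrightarrow> i = i'"
  unfolding PS_mem by (metis linorder_neqE_nat zero_neq_neg_one zero_neq_one)

lemma PS_shift_sub: "(\<lambda>(i,j). (Suc i, Suc j)) ` PS (\<lambda>i. t (Suc i)) \<subseteq> PS t"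
proof clarify
  fix i j assume "(i, j) \<in> PS (\<lambda>i. t (Suc i))"
  then show "(Suc i, Suc j) \<in> PS t" unfolding PS_mem
    by (metis Suc_lessE Suc_less_eq)
qed

lemma PS_shift_inj: "inj_on (\<lambda>(i,j). (Suc i, Suc j)) A"
  by (auto simp: inj_on_def)

lemma SC_shift_le: "finite (supp t) \<Longrightarrow> SC (\<lambda>i. t (Suc i)) \<le> SC t"
  unfolding SC_PS
  by (metis PS_fin PS_shift_inj PS_shift_sub card_image card_mono)

lemma SC_shift_eq: "t 0 = 0 \<Longrightarrow> finite (supp t) \<Longrightarrow> SC (\<lambda>i. t (Suc i)) = SC t"
proof -
  assume t0: "t 0 = 0" and f: "finite (supp t)"
  have "PS t \<subseteq> (\<lambda>(i,j). (Suc i, Suc j)) ` PS (\<lambda>i. t (Suc i))"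
  proof clarify
    fix i j assume a: "(i, j) \<in> PS t"
    then have "i \<noteq> 0" using PS_nz t0 by metis
    then obtain i' where i: "i = Suc i'" using not0_implies_Suc by blast
    obtain j' where j: "j = Suc j'" using a PS_nz i by (metis Suc_lessE)
    have "(i', j') \<in> PS (\<lambda>i. t (Suc i))" using a unfolding i j PS_mem by auto
    then show "(i, j) \<in> (\<lambda>(i,j). (Suc i, Suc j)) ` PS (\<lambda>i. t (Suc i))" using i j by force
  qed
  then have "PS t = (\<lambda>(i,j). (Suc i, Suc j)) ` PS (\<lambda>i. t (Suc i))" using PS_shift_sub by blast
  then show ?thesis unfolding SC_PS by (simp add: PS_shift_inj card_image)
qed

lemma SC_shift_less:
  assumes f: "finite (supp t)" and t0: "t 0 \<noteq> 0" and j: "0 < j" "t j = - t 0" "\<forall>k. 0 < k \<and> k < j \<longrightarrow> t k = 0"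
    and ts: "\<forall>i. t i \<in> {-1,0,1}"
  shows "SC (\<lambda>i. t (Suc i)) < SC t"
proof -
  have "(0, j) \<in> PS t" unfolding PS_mem using j t0 ts by auto
  moreover have "(0, j) \<notin> (\<lambda>(i,j). (Suc i, Suc j)) ` PS (\<lambda>i. t (Suc i))" by auto
  ultimately have "(\<lambda>(i,j). (Suc i, Suc j)) ` PS (\<lambda>i. t (Suc i)) \<subset> PS t" using PS_shift_sub by blast
  then show ?thesis unfolding SC_PS
    by (metis PS_fin PS_shift_inj card_image f psubset_card_mono)
qed

lemma SC_neg: "SC (\<lambda>i. - t i) = SC t"
proof -
  have "PS (\<lambda>i. - t i) = PS t" unfolding PS_def pair_iff by auto
  then show ?thesis unfolding SC_PS by simp
qed

lemma SC_lt_supp: assumes f: "finite (supp t)" and ne: "supp t \<noteq> {}" shows "SC t < card (supp t)"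
proof -
  have "fst ` PS t \<subseteq> supp t - {Max (supp t)}"
  proof
    fix x assume "x \<in> fst ` PS t"
    then obtain i j where a: "(i, j) \<in> PS t" and x: "x = i" by auto
    then have "i \<in> supp t" "j \<in> supp t" "i < j" using PS_nz unfolding supp_def by auto
    moreover have "j \<le> Max (supp t)" using f \<open>j \<in> supp t\<close> by (rule Max_ge)
    ultimately show "x \<in> supp t - {Max (supp t)}" using x by auto
  qed
  moreover have "inj_on fst (PS t)" by (auto simp: inj_on_def intro: PS_uniq1)
  ultimately have "card (PS t) \<le> card (supp t - {Max (supp t)})"
    by (metis card_image card_mono f finite_Diff)
  also have "\<dots> < card (supp t)" using f ne by (simp add: card_gt_0_iff)
  finally show ?thesis unfolding SC_PS .
qed



lemma Sign_vals: "Sign p i \<in> {-1, 0, 1}"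
  unfolding Sign_def by auto

lemma Sign_nz: "Sign p i \<noteq> 0 \<longleftrightarrow> coeff p i \<noteq> 0"
  unfolding Sign_def by auto

lemma Sign_supp_fin: "finite (supp (Sign p))"
proof -
  have "supp (Sign p) \<subseteq> {..degree p}" unfolding supp_def Sign_nz
    using le_degree by auto
  then show ?thesis using finite_subset by blast
qed

lemma Sign_seq: "Sign p \<in> sign_seqs"
  unfolding sign_seqs_def using Sign_vals Sign_supp_fin unfolding supp_def by auto

lemma Sign_pderiv: "Sign (pderiv p) = (\<lambda>i. Sign (p::real poly) (Suc i))"
proof
  fix i
  have "coeff (pderiv p) i = of_nat (Suc i) * coeff p (Suc i)" by (rule coeff_pderiv)
  moreover have "(of_nat (Suc i) :: real) > 0" by simp
  ultimately show "Sign (pderiv p) i = Sign p (Suc i)" unfolding Sign_def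
    by (simp add: zero_less_mult_iff mult_less_0_iff)
qed

lemma Sign_uminus: "Sign (- p) = (\<lambda>i. - Sign p i)"
  unfolding Sign_def by auto

definition rp :: "real poly \<Rightarrow> real set" where
  "rp p = {x. 0 < x \<and> poly p x = 0}"

lemma rp_fin: "p \<noteq> 0 \<Longrightarrow> finite (rp p)"
proof -
  assume "p \<noteq> 0"
  moreover have "rp p \<subseteq> {x. poly p x = 0}" by (auto simp: rp_def)
  ultimately show ?thesis using poly_roots_finite[of p] finite_subset by blast
qed

lemma near0_pos:
  fixes q :: "real poly"
  shows "(\<forall>i<m. coeff q i = 0) \<Longrightarrow> coeff q m > 0 \<Longrightarrow> \<exists>d>0. \<forall>x. 0 < x \<and> x < d \<longrightarrow> poly q x > 0"
proof (induction m arbitrary: q)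
  case 0
  have "isCont (\<lambda>x. poly q x) 0" by simp
  then have "((\<lambda>x. poly q x) \<longlongrightarrow> poly q 0) (at 0)" by (simp add: isCont_def)
  moreover have "poly q 0 > 0" using 0 by (simp add: poly_0_coeff_0)
  ultimately have "eventually (\<lambda>x. poly q x > 0) (at 0)" by (rule order_tendstoD)
  then obtain d where "d > 0" "\<forall>x\<in>UNIV. x \<noteq> 0 \<and> dist x 0 < d \<longrightarrow> poly q x > 0"
    unfolding eventually_at by blast
  then show ?case by (intro exI[of _ d]) (auto simp: dist_real_def)
next
  case (Suc m)
  obtain a q' where q: "q = pCons a q'" by (cases q)
  have "\<forall>i<m. coeff q' i = 0" "coeff q' m > 0" using Suc.prems q by auto
  from Suc.IH[OF this] obtain d where d: "d > 0" "\<forall>x. 0 < x \<and> x < d \<longrightarrow> poly q' x > 0" by blast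
  have a: "a = 0" using Suc.prems(1) q by (metis coeff_pCons_0 zero_less_Suc)
  show ?case using d by (intro exI[of _ d]) (simp add: q a)
qed

lemma rolle_count:
  fixes p :: "real poly"
  assumes p0: "p \<noteq> 0" and d0: "pderiv p \<noteq> 0" and ne: "rp p \<noteq> {}"
  shows "card (rp p) - 1 \<le> card (rp (pderiv p))"
    and "(\<exists>z\<in>rp (pderiv p). z < Min (rp p)) \<Longrightarrow> card (rp p) \<le> card (rp (pderiv p))"
proof -
  let ?R = "rp p"
  have fR: "finite ?R" using rp_fin p0 .
  have fD: "finite (rp (pderiv p))" using rp_fin d0 .
  define nxt where "nxt r = Min {s\<in>?R. s > r}" for r
  have nxt: "nxt r \<in> ?R \<and> r < nxt r \<and> (\<forall>s\<in>?R. s > r \<longrightarrow> nxt r \<le> s)" if "r \<in> ?R - {Max ?R}" for r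
  proof -
    have "Max ?R \<in> ?R" "r \<le> Max ?R" using fR ne that by auto
    then have "Max ?R \<in> {s\<in>?R. s > r}" using that by auto
    moreover have "finite {s\<in>?R. s > r}" using fR by auto
    ultimately show ?thesis unfolding nxt_def
      by (metis (mono_tags, lifting) Min_in Min_le empty_iff mem_Collect_eq)
  qed
  have ex: "\<exists>z. r < z \<and> z < nxt r \<and> poly (pderiv p) z = 0" if "r \<in> ?R - {Max ?R}" for r
  proof -
    have "r < nxt r" "poly p r = 0" "poly p (nxt r) = 0" using nxt[OF that] that unfolding rp_def by auto
    from MVT2[OF this(1), of "poly p" "poly (pderiv p)"] this show ?thesis by auto
  qed
  define g where "g r = (SOME z. r < z \<and> z < nxt r \<and> poly (pderiv p) z = 0)" for r
  have g: "r < g r \<and> g r < nxt r \<and> poly (pderiv p) (g r) = 0" if "r \<in> ?R - {Max ?R}" for r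
    unfolding g_def using someI_ex[OF ex[OF that]] .
  have gR: "g ` (?R - {Max ?R}) \<subseteq> rp (pderiv p)"
  proof
    fix z assume "z \<in> g ` (?R - {Max ?R})"
    then obtain r where r: "r \<in> ?R - {Max ?R}" "z = g r" by auto
    then show "z \<in> rp (pderiv p)" using g[OF r(1)] unfolding rp_def by auto
  qed
  have ginj: "inj_on g (?R - {Max ?R})"
  proof (rule linorder_inj_onI)
    fix r1 r2 assume a: "r1 < r2" "r1 \<in> ?R - {Max ?R}" "r2 \<in> ?R - {Max ?R}"
    have "nxt r1 \<le> r2" using nxt[OF a(2)] a by auto
    then show "g r1 \<noteq> g r2" using g[OF a(2)] g[OF a(3)] by auto
  qed auto
  have c1: "card (g ` (?R - {Max ?R})) = card ?R - 1"
    using ginj fR ne by (simp add: card_image)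
  show "card ?R - 1 \<le> card (rp (pderiv p))"
    using card_mono[OF fD gR] c1 by simp
  assume "\<exists>z\<in>rp (pderiv p). z < Min ?R"
  then obtain z where z: "z \<in> rp (pderiv p)" "z < Min ?R" by blast
  have "z \<notin> g ` (?R - {Max ?R})"
  proof
    assume "z \<in> g ` (?R - {Max ?R})"
    then obtain r where r: "r \<in> ?R - {Max ?R}" "z = g r" by auto
    have "Min ?R \<le> r" using fR r by auto
    then show False using g[OF r(1)] r z by auto
  qed
  then have "card (insert z (g ` (?R - {Max ?R}))) = card ?R" using c1 fR ne
    by (simp add: card_insert_if card_gt_0_iff)
  moreover have "insert z (g ` (?R - {Max ?R})) \<subseteq> rp (pderiv p)" using z gR by auto
  ultimately show "card ?R \<le> card (rp (pderiv p))" using card_mono[OF fD] by metis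
qed

lemma descartes_step:
  fixes p :: "real poly"
  assumes IH: "\<And>q. degree q < degree p \<Longrightarrow> q \<noteq> 0 \<Longrightarrow> card (rp q) \<le> SC (Sign q)"
    and p0: "p \<noteq> 0" and c0: "coeff p 0 > 0"
  shows "card (rp p) \<le> SC (Sign p)"
proof (cases "rp p = {}")
  case True then show ?thesis by simp
next
  case ne: False
  have dp: "degree p \<noteq> 0"
  proof
    assume "degree p = 0"
    then have "\<And>x. poly p x = coeff p 0" by (simp add: poly_altdef)
    then show False using ne c0 unfolding rp_def by auto
  qed
  have d0: "pderiv p \<noteq> 0" using dp by (simp add: pderiv_eq_0_iff)
  have dlt: "degree (pderiv p) < degree p" using dp by (simp add: degree_pderiv)
  have IHd: "card (rp (pderiv p)) \<le> SC (\<lambda>i. Sign p (Suc i))"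
    using IH[OF dlt d0] Sign_pderiv by simp
  define J where "J = {j. 0 < j \<and> coeff p j \<noteq> 0}"
  have dJ: "degree p \<in> J" unfolding J_def using dp p0 by auto
  have J1: "Least (\<lambda>j. j \<in> J) \<in> J" using dJ by (rule LeastI)
  have J2: "\<And>k. 0 < k \<Longrightarrow> k < Least (\<lambda>j. j \<in> J) \<Longrightarrow> coeff p k = 0"
  proof -
    fix k assume "0 < k" "k < Least (\<lambda>j. j \<in> J)"
    then have "k \<notin> J" using not_less_Least by blast
    then show "coeff p k = 0" using \<open>0 < k\<close> unfolding J_def by auto
  qed
  define j0 where "j0 = Least (\<lambda>j. j \<in> J)"
  have j0: "0 < j0" "coeff p j0 \<noteq> 0" "\<And>k. 0 < k \<Longrightarrow> k < j0 \<Longrightarrow> coeff p k = 0"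
    using J1 J2 unfolding j0_def J_def by auto
  show ?thesis
  proof (cases "coeff p j0 < 0")
    case True
    have "SC (\<lambda>i. Sign p (Suc i)) < SC (Sign p)"
      apply (rule SC_shift_less[of _ j0])
      using Sign_supp_fin j0 True c0 Sign_vals unfolding Sign_def by auto
    then show ?thesis using rolle_count(1)[OF p0 d0 ne] IHd by linarith
  next
    case False
    then have pos: "coeff p j0 > 0" using j0 by linarith
    have "\<forall>i<j0 - 1. coeff (pderiv p) i = 0" "coeff (pderiv p) (j0 - 1) > 0"
      using j0 pos by (auto simp: coeff_pderiv)
    from near0_pos[OF this] obtain d where d: "d > 0" "\<forall>x. 0 < x \<and> x < d \<longrightarrow> poly (pderiv p) x > 0" by blast
    define r1 where "r1 = Min (rp p)"
    have r1: "r1 \<in> rp p" unfolding r1_def using rp_fin[OF p0] ne by simp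
    then have "0 < r1" "poly p r1 = 0" unfolding rp_def by auto
    from MVT2[OF this(1), of "poly p" "poly (pderiv p)"] obtain \<xi> where
      xi: "0 < \<xi>" "\<xi> < r1" "poly p r1 - poly p 0 = (r1 - 0) * poly (pderiv p) \<xi>" by auto
    have "poly p 0 > 0" using c0 by (simp add: poly_0_coeff_0)
    then have "r1 * poly (pderiv p) \<xi> < 0" using xi \<open>poly p r1 = 0\<close> by simp
    then have "poly (pderiv p) \<xi> < 0" using \<open>0 < r1\<close> by (simp add: mult_less_0_iff)
    define x0 where "x0 = min (d/2) (\<xi>/2)"
    have x0: "0 < x0" "x0 < \<xi>" "x0 < d" using d xi unfolding x0_def by auto
    then have "poly (pderiv p) x0 > 0" using d by auto
    from poly_IVT_neg[OF x0(2) this \<open>poly (pderiv p) \<xi> < 0\<close>] obtain z where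
      z: "x0 < z" "z < \<xi>" "poly (pderiv p) z = 0" by auto
    then have "z \<in> rp (pderiv p)" "z < Min (rp p)" using x0 xi unfolding rp_def r1_def by auto
    then have "card (rp p) \<le> card (rp (pderiv p))" using rolle_count(2)[OF p0 d0 ne] by blast
    then show ?thesis using IHd SC_shift_le[OF Sign_supp_fin] by (meson le_trans)
  qed
qed

lemma rp_uminus: "rp (- p) = rp p" unfolding rp_def by auto

theorem descartes:
  fixes p :: "real poly"
  shows "p \<noteq> 0 \<Longrightarrow> card (rp p) \<le> SC (Sign p)"
proof (induction "degree p" arbitrary: p rule: less_induct)
  case less
  show ?case
  proof (cases "coeff p 0 = 0")
    case True
    obtain a q where pq: "p = pCons a q" by (cases p)
    have a: "a = 0" using True pq by simp
    have q0: "q \<noteq> 0" using less.prems pq a by auto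
    have "degree q < degree p" using pq q0 by simp
    from less.hyps[OF this q0] have h: "card (rp q) \<le> SC (Sign q)" .
    have "rp p = rp q" unfolding rp_def pq a by auto
    moreover have "Sign q = (\<lambda>i. Sign p (Suc i))" by (rule ext) (simp add: Sign_def pq)
    moreover have "SC (\<lambda>i. Sign p (Suc i)) = SC (Sign p)"
      by (rule SC_shift_eq) (use True Sign_supp_fin in \<open>auto simp: Sign_def\<close>)
    ultimately show ?thesis using h by simp
  next
    case False
    show ?thesis
    proof (cases "coeff p 0 > 0")
      case True
      show ?thesis by (rule descartes_step[OF _ less.prems True]) (use less.hyps in auto)
    next
      case False2: False
      have "coeff (- p) 0 > 0" using False False2 by simp
      have "card (rp (- p)) \<le> SC (Sign (- p))"
        by (rule descartes_step[OF _ _ \<open>coeff (- p) 0 > 0\<close>]) (use less.hyps less.prems in auto)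
      then show ?thesis by (simp add: rp_uminus Sign_uminus SC_neg)
    qed
  qed
qed



definition adm :: "(nat \<Rightarrow> int) \<Rightarrow> (nat \<Rightarrow> int) \<Rightarrow> bool" where
  "adm s t \<longleftrightarrow> t \<in> sign_seqs \<and> (\<forall>i. t i \<in> {-1, 0, s i})"

lemma SC_bound:
  assumes fK: "finite {i. s i = 1}" and a: "adm s t"
  shows "SC t \<le> 2 * card {i. s i = 1}"
proof -
  let ?K = "{i. s i = 1}"
  define \<phi> where "\<phi> = (\<lambda>(i::nat, j::nat). if t i = 1 then (i, True) else (j, False))"
  have sub: "\<phi> ` PS t \<subseteq> ?K \<times> (UNIV :: bool set)"
  proof
    fix z assume "z \<in> \<phi> ` PS t"
    then obtain i j where ij: "(i, j) \<in> PS t" "z = \<phi> (i, j)" by auto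
    have "t i = 1 \<or> t j = 1" using ij(1) unfolding PS_mem by auto
    moreover have "\<And>k. t k = 1 \<Longrightarrow> s k = 1" using a unfolding adm_def by (metis empty_iff insert_iff one_neq_neg_one one_neq_zero)
    ultimately show "z \<in> ?K \<times> UNIV" using ij(2) unfolding \<phi>_def by auto
  qed
  have inj: "inj_on \<phi> (PS t)"
  proof (rule inj_onI)
    fix x y assume x: "x \<in> PS t" and y: "y \<in> PS t" and e: "\<phi> x = \<phi> y"
    obtain i j where xi: "x = (i, j)" by (cases x)
    obtain i' j' where yi: "y = (i', j')" by (cases y)
    show "x = y"
    proof (cases "t i = 1")
      case True
      then have "t i' = 1 \<and> i = i'" using e unfolding xi yi \<phi>_def by (auto split: if_splits)
      then show ?thesis using x y xi yi PS_uniq1 by blast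
    next
      case False
      then have "t i' \<noteq> 1 \<and> j = j'" using e unfolding xi yi \<phi>_def by (auto split: if_splits)
      then show ?thesis using x y xi yi PS_uniq2 by blast
    qed
  qed
  have "card (PS t) = card (\<phi> ` PS t)" using inj by (simp add: card_image)
  also have "\<dots> \<le> card (?K \<times> (UNIV :: bool set))" using sub fK by (intro card_mono) auto
  also have "\<dots> = 2 * card ?K" by (simp add: card_cartesian_product)
  finally show ?thesis unfolding SC_PS .
qed

lemma dfrak_fin:
  assumes fK: "finite {i. s i = 1}"
  shows "finite {SC t | t. t \<in> sign_seqs \<and> (\<forall>i. t i \<in> {-1, 0, s i})}"
proof -
  have "{SC t | t. t \<in> sign_seqs \<and> (\<forall>i. t i \<in> {-1, 0, s i})} \<subseteq> {..2 * card {i. s i = 1}}"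
    using SC_bound[OF fK] unfolding adm_def by auto
  then show ?thesis using finite_subset by blast
qed

lemma dfrak_ge: "finite {i. s i = 1} \<Longrightarrow> adm s t \<Longrightarrow> SC t \<le> dfrak s"
  unfolding dfrak_def using dfrak_fin by (intro Max_ge) (auto simp: adm_def)

lemma dfrak_attain:
  assumes "finite {i. s i = 1}" shows "\<exists>t. adm s t \<and> SC t = dfrak s"
proof -
  have "(\<lambda>_. 0) \<in> sign_seqs" unfolding sign_seqs_def by auto
  then have ne: "{SC t | t. t \<in> sign_seqs \<and> (\<forall>i. t i \<in> {-1, 0, s i})} \<noteq> {}" by auto
  from Max_in[OF dfrak_fin[OF assms] ne] show ?thesis unfolding dfrak_def adm_def by auto
qed

lemma chg:
  assumes ts: "\<forall>i. t i \<in> {-1, 0, 1::int}"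
  shows "a < b \<Longrightarrow> t a \<noteq> 0 \<Longrightarrow> t b = - t a \<Longrightarrow> \<exists>i j. (i, j) \<in> PS t \<and> a \<le> i \<and> j \<le> b"
proof (induction "b - a" arbitrary: a rule: less_induct)
  case less
  define c where "c = (LEAST k. a < k \<and> t k \<noteq> 0)"
  have P: "a < b \<and> t b \<noteq> 0" using less.prems by auto
  have c1: "a < c \<and> t c \<noteq> 0" unfolding c_def using P by (rule LeastI)
  have c2: "c \<le> b" unfolding c_def using P by (rule Least_le)
  have c3: "\<forall>k. a < k \<and> k < c \<longrightarrow> t k = 0" unfolding c_def using not_less_Least by blast
  show ?case
  proof (cases "t c = - t a")
    case True
    have "(a, c) \<in> PS t" unfolding PS_mem using c1 c3 True less.prems(2) ts
      by (metis empty_iff insert_iff minus_minus)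
    then show ?thesis using c2 by blast
  next
    case False
    then have tc: "t c = t a" using ts c1 less.prems(2)
      by (metis empty_iff insert_iff minus_minus minus_zero)
    have "c \<noteq> b"
    proof
      assume "c = b" then have "t a = - t a" using tc less.prems(3) by simp
      then show False using less.prems(2) by simp
    qed
    then have "c < b" using c2 by simp
    from less.hyps[of c] this c1 tc less.prems(3) obtain i j where "(i, j) \<in> PS t" "c \<le> i" "j \<le> b"
      by (metis diff_less_mono2 less.prems(1))
    then show ?thesis using c1 by (meson le_trans less_imp_le)
  qed
qed



lemma supp_ne_SC: "SC t > 0 \<Longrightarrow> supp t \<noteq> {}"
proof -
  assume "SC t > 0"
  then have "PS t \<noteq> {}" unfolding SC_PS by auto
  then obtain i j where "(i, j) \<in> PS t" by auto
  then show ?thesis using PS_nz unfolding supp_def by auto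
qed

lemma extract_alt:
  fixes t :: "nat \<Rightarrow> int"
  shows "t \<in> sign_seqs \<Longrightarrow> supp t \<noteq> {} \<Longrightarrow> n \<le> SC t \<Longrightarrow>
    \<exists>e. strict_mono e \<and> (\<forall>k\<le>n. t (e k) \<noteq> 0) \<and> (\<forall>k<n. t (e (Suc k)) = - t (e k)) \<and> t (e n) = t (Max (supp t))"
proof (induction n arbitrary: t)
  case 0
  have fs: "finite (supp t)" using 0 unfolding sign_seqs_def supp_def by auto
  have "Max (supp t) \<in> supp t" using fs 0 by simp
  then show ?case
    by (intro exI[of _ "\<lambda>k. Max (supp t) + k"]) (auto simp: strict_mono_Suc_iff supp_def)
next
  case (Suc n)
  have fs: "finite (supp t)" using Suc.prems unfolding sign_seqs_def supp_def by auto
  have ts: "\<forall>i. t i \<in> {-1, 0, 1}" using Suc.prems unfolding sign_seqs_def by auto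
  have fP: "finite (PS t)" using PS_fin[OF fs] .
  have neP: "PS t \<noteq> {}" using Suc.prems(3) unfolding SC_PS by auto
  define ii where "ii = Max (fst ` PS t)"
  have "ii \<in> fst ` PS t" unfolding ii_def using fP neP by simp
  then obtain jj where ijj: "(ii, jj) \<in> PS t" by auto
  have iimax: "\<And>i j. (i, j) \<in> PS t \<Longrightarrow> i \<le> ii" unfolding ii_def using fP
    by (metis Max_ge finite_imageI fst_conv image_eqI)
  define t' where "t' = (\<lambda>i. if i \<le> ii then t i else 0)"
  have t'seq: "t' \<in> sign_seqs" using Suc.prems(1) unfolding sign_seqs_def t'_def
    by (auto elim: finite_subset[rotated])
  have tii: "t ii \<noteq> 0" "t jj = - t ii" "ii < jj" using PS_nz[OF ijj] by auto
  have supp': "supp t' = supp t \<inter> {..ii}" unfolding supp_def t'_def by auto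
  have "ii \<in> supp t'" using tii unfolding t'_def supp_def by simp
  then have supp'ne: "supp t' \<noteq> {}" by blast
  have fs': "finite (supp t')" unfolding supp' using fs by simp
  have maxs': "Max (supp t') = ii"
    by (rule Max_eqI) (use fs' tii in \<open>auto simp: t'_def supp_def split: if_splits\<close>)
  have sub: "PS t - {(ii, jj)} \<subseteq> PS t'"
  proof
    fix x assume x: "x \<in> PS t - {(ii, jj)}"
    obtain i j where xij: "x = (i, j)" by (cases x)
    have pij: "(i, j) \<in> PS t" using x xij by simp
    have "i \<le> ii" using iimax pij .
    moreover have "i \<noteq> ii" using PS_uniq1[OF ijj] pij x xij by auto
    ultimately have iis: "i < ii" by simp
    have "j \<le> ii"
    proof (rule ccontr)
      assume "\<not> j \<le> ii" then have "t ii = 0" using pij iis unfolding PS_mem by auto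
      then show False using tii by simp
    qed
    then show "x \<in> PS t'" using pij iis unfolding xij PS_mem t'_def by auto
  qed
  have "n \<le> card (PS t - {(ii, jj)})" using Suc.prems(3) ijj fP unfolding SC_PS by simp
  also have "\<dots> \<le> card (PS t')" using sub PS_fin[OF fs'] by (rule card_mono[rotated])
  finally have nle: "n \<le> SC t'" unfolding SC_PS .
  from Suc.IH[OF t'seq supp'ne nle] obtain e where
    e: "strict_mono e" "\<forall>k\<le>n. t' (e k) \<noteq> 0" "\<forall>k<n. t' (e (Suc k)) = - t' (e k)" "t' (e n) = t' (Max (supp t'))"
    by blast
  have ek: "\<And>k. k \<le> n \<Longrightarrow> e k \<le> ii \<and> t' (e k) = t (e k)" using e(2) unfolding t'_def by (auto split: if_splits)
  define e' where "e' = (\<lambda>k. if k \<le> n then e k else jj + (k - Suc n))"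
  have "e n \<le> ii" using ek by simp
  have sm: "strict_mono e'" unfolding strict_mono_Suc_iff
  proof
    fix k
    show "e' k < e' (Suc k)"
    proof (cases "k < n")
      case True then show ?thesis using e(1) unfolding e'_def strict_mono_def by auto
    next
      case False
      then show ?thesis using \<open>e n \<le> ii\<close> tii(3) unfolding e'_def by (cases "k = n") auto
    qed
  qed
  have ten: "t (e n) = t ii" using e(4) ek[of n] maxs' tii unfolding t'_def by simp
  define M where "M = Max (supp t)"
  have "jj \<in> supp t" using tii unfolding supp_def by simp
  then have jjM: "jj \<le> M" "t M \<noteq> 0" unfolding M_def using fs Max_in Suc.prems(2) by (auto simp: supp_def)
  have tjjM: "t jj = t M"
  proof (rule ccontr)
    assume ne: "t jj \<noteq> t M"
    then have "jj < M" using jjM by (cases "jj = M") auto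
    moreover have "t jj \<noteq> 0" using tii by simp
    moreover have "t M = - t jj" using ne ts jjM(2) \<open>t jj \<noteq> 0\<close>
      by (metis empty_iff insert_iff minus_minus minus_zero)
    ultimately obtain i j where "(i, j) \<in> PS t" "jj \<le> i" using chg[OF ts] by blast
    then show False using iimax tii(3) by fastforce
  qed
  show ?case
  proof (intro exI[of _ e'] conjI sm allI impI)
    fix k assume "k \<le> Suc n"
    show "t (e' k) \<noteq> 0"
    proof (cases "k \<le> n")
      case True then show ?thesis using ek[of k] e(2) unfolding e'_def by auto
    next
      case False then have "k = Suc n" using \<open>k \<le> Suc n\<close> by simp
      then show ?thesis using tii unfolding e'_def by simp
    qed
  next
    fix k assume k: "k < Suc n"
    show "t (e' (Suc k)) = - t (e' k)"
    proof (cases "k < n")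
      case True then show ?thesis using e(3) ek unfolding e'_def by auto
    next
      case False then have "k = n" using k by simp
      then show ?thesis using ten tii unfolding e'_def by simp
    qed
  next
    show "t (e' (Suc n)) = t (Max (supp t))" using tjjM unfolding e'_def M_def by simp
  qed
qed



lemma roots_count:
  fixes h :: "real poly" and x :: "nat \<Rightarrow> real"
  assumes "h \<noteq> 0" "\<forall>j\<in>{1..m}. 0 < x j \<and> poly h (x j) = 0" "inj_on x {1..m}"
  shows "m \<le> card (rp h)"
proof -
  have "x ` {1..m} \<subseteq> rp h" using assms(2) unfolding rp_def by auto
  then have "card (x ` {1..m}) \<le> card (rp h)" using rp_fin[OF assms(1)] by (rule card_mono[rotated])
  then show ?thesis using assms(3) by (simp add: card_image)
qed

lemma ker:
  fixes x :: "nat \<Rightarrow> real"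
  shows "strict_mono e \<Longrightarrow> \<forall>j\<in>{1..m}. 0 < x j \<Longrightarrow> inj_on x {1..m} \<Longrightarrow>
    \<exists>h::real poly. h \<noteq> 0 \<and> (\<forall>i. coeff h i \<noteq> 0 \<longrightarrow> i \<in> e ` {0..m}) \<and> (\<forall>j\<in>{1..m}. poly h (x j) = 0)"
proof (induction m arbitrary: e)
  case 0
  show ?case by (intro exI[of _ "monom 1 (e 0)"]) (auto simp: coeff_monom split: if_splits)
next
  case (Suc m)
  have xs: "\<forall>j\<in>{1..m}. 0 < x j" "inj_on x {1..m}" using Suc.prems by (auto simp: inj_on_def)
  have sm2: "strict_mono (\<lambda>k. e (Suc k))" using Suc.prems(1) unfolding strict_mono_def by simp
  obtain h1 where h1: "h1 \<noteq> 0" "\<forall>i. coeff h1 i \<noteq> 0 \<longrightarrow> i \<in> e ` {0..m}" "\<forall>j\<in>{1..m}. poly h1 (x j) = 0"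
    using Suc.IH[OF Suc.prems(1) xs] by blast
  obtain h2 where h2: "h2 \<noteq> 0" "\<forall>i. coeff h2 i \<noteq> 0 \<longrightarrow> i \<in> (\<lambda>k. e (Suc k)) ` {0..m}" "\<forall>j\<in>{1..m}. poly h2 (x j) = 0"
    using Suc.IH[OF sm2 xs] by blast
  define y where "y = x (Suc m)"
  have sub1: "e ` {0..m} \<subseteq> e ` {0..Suc m}" by auto
  have sub2: "(\<lambda>k. e (Suc k)) ` {0..m} \<subseteq> e ` {0..Suc m}" by auto
  show ?case
  proof (cases "poly h1 y = 0")
    case True
    show ?thesis
    proof (intro exI[of _ h1] conjI)
      show "\<forall>i. coeff h1 i \<noteq> 0 \<longrightarrow> i \<in> e ` {0..Suc m}" using h1(2) sub1 by blast
      show "\<forall>j\<in>{1..Suc m}. poly h1 (x j) = 0" using h1(3) True unfolding y_def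
        by (metis atLeastAtMostSuc_conv atLeastAtMost_iff insert_iff le_add1 plus_1_eq_Suc)
    qed (use h1 in auto)
  next
    case False
    define h where "h = smult (poly h2 y) h1 - smult (poly h1 y) h2"
    have hroots: "\<forall>j\<in>{1..Suc m}. poly h (x j) = 0"
    proof
      fix j assume "j \<in> {1..Suc m}"
      then have "j \<in> {1..m} \<or> j = Suc m" by auto
      then show "poly h (x j) = 0" unfolding h_def y_def using h1(3) h2(3) by auto
    qed
    have hsupp: "\<forall>i. coeff h i \<noteq> 0 \<longrightarrow> i \<in> e ` {0..Suc m}"
    proof (intro allI impI)
      fix i assume "coeff h i \<noteq> 0"
      then have "coeff h1 i \<noteq> 0 \<or> coeff h2 i \<noteq> 0" unfolding h_def by auto
      then show "i \<in> e ` {0..Suc m}" using h1(2) h2(2) sub1 sub2 by blast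
    qed
    have "h \<noteq> 0"
    proof
      assume h0: "h = 0"
      have c2: "coeff h2 i = (poly h2 y / poly h1 y) * coeff h1 i" for i
      proof -
        have "coeff h i = 0" using h0 by simp
        then have "poly h2 y * coeff h1 i = poly h1 y * coeff h2 i" unfolding h_def by simp
        then show ?thesis using False by (simp add: field_simps)
      qed
      have inj: "inj e" using Suc.prems(1) strict_mono_imp_inj_on by blast
      have s2: "supp (Sign h2) \<subseteq> e ` {1..m}"
      proof
        fix i assume "i \<in> supp (Sign h2)"
        then have nz: "coeff h2 i \<noteq> 0" unfolding supp_def Sign_nz by simp
        then have "coeff h1 i \<noteq> 0" using c2[of i] by auto
        then obtain k where k: "k \<le> m" "i = e k" using h1(2) by auto
        obtain l where l: "l \<le> m" "i = e (Suc l)" using h2(2) nz by auto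
        have "k = Suc l" using k l inj unfolding inj_def by auto
        then show "i \<in> e ` {1..m}" using k by auto
      qed
      have "supp (Sign h2) \<noteq> {}"
      proof -
        obtain i where "coeff h2 i \<noteq> 0" using h2(1) by (metis leading_coeff_0_iff)
        then show ?thesis unfolding supp_def Sign_nz by auto
      qed
      then have "SC (Sign h2) < card (supp (Sign h2))" using SC_lt_supp Sign_supp_fin by blast
      also have "\<dots> \<le> card (e ` {1..m})" using s2 by (intro card_mono) auto
      also have "\<dots> \<le> m" using card_image_le[of "{1..m}" e] by simp
      finally have "SC (Sign h2) < m" .
      moreover have "m \<le> card (rp h2)" using roots_count[OF h2(1) _ xs(2)] h2(3) xs(1) by blast
      ultimately show False using descartes[OF h2(1)] by linarith
    qed
    then show ?thesis using hroots hsupp by blast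
  qed
qed

lemma alt:
  assumes sm: "strict_mono e" and fs: "finite (supp t)" and su: "supp t \<subseteq> e ` {0..m}" and le: "m \<le> SC t"
  shows "\<forall>k<m. (e k, e (Suc k)) \<in> PS t"
proof -
  define Q where "Q = {k. k < m \<and> (\<exists>l\<le>m. (e k, e l) \<in> PS t)}"
  have inj: "inj e" using sm strict_mono_imp_inj_on by blast
  have "fst ` PS t \<subseteq> e ` Q"
  proof
    fix z assume "z \<in> fst ` PS t"
    then obtain i j where ij: "(i, j) \<in> PS t" "z = i" by auto
    then have "i \<in> supp t" "j \<in> supp t" "i < j" using PS_nz unfolding supp_def by auto
    then have "i \<in> e ` {0..m}" "j \<in> e ` {0..m}" using su by auto
    then obtain k l where kl: "k \<le> m" "l \<le> m" "i = e k" "j = e l" by auto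
    then have "k < l" using \<open>i < j\<close> sm by (simp add: strict_mono_less)
    then have "k \<in> Q" unfolding Q_def using kl ij by auto
    then show "z \<in> e ` Q" using ij kl by auto
  qed
  moreover have "inj_on fst (PS t)" by (auto simp: inj_on_def intro: PS_uniq1)
  moreover have fQ: "finite Q" unfolding Q_def by simp
  ultimately have "card (PS t) \<le> card (e ` Q)"
  proof -
    assume a: "fst ` PS t \<subseteq> e ` Q" "inj_on fst (PS t)" "finite Q"
    have "card (PS t) = card (fst ` PS t)" using a(2) by (simp add: card_image)
    also have "\<dots> \<le> card (e ` Q)" using a(1) a(3) by (intro card_mono) auto
    finally show ?thesis .
  qed
  also have "\<dots> \<le> card Q" by (rule card_image_le) (simp add: Q_def)
  finally have "m \<le> card Q" using le unfolding SC_PS by simp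
  moreover have "Q \<subseteq> {..<m}" unfolding Q_def by auto
  ultimately have Qeq: "Q = {..<m}" by (metis card_lessThan card_subset_eq finite_lessThan le_antisym card_mono)
  have nzk: "t (e k) \<noteq> 0" if "k \<le> m" "0 < m" for k
  proof (cases "k < m")
    case True
    then have "k \<in> Q" using Qeq by simp
    then show ?thesis unfolding Q_def using PS_nz by blast
  next
    case False
    then have k: "k = m" using that by simp
    have "m - 1 \<in> Q" using Qeq that by simp
    then obtain l where l: "l \<le> m" "(e (m - 1), e l) \<in> PS t" unfolding Q_def by auto
    then have "m - 1 < l" using PS_nz sm by (metis strict_mono_less)
    then have "l = m" using l by simp
    then show ?thesis using k l PS_nz by blast
  qed
  show ?thesis
  proof (intro allI impI)
    fix k assume k: "k < m"
    then obtain l where l: "l \<le> m" "(e k, e l) \<in> PS t" using Qeq unfolding Q_def by auto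
    then have "k < l" using PS_nz sm by (metis strict_mono_less)
    have "l = Suc k"
    proof (rule ccontr)
      assume "l \<noteq> Suc k"
      then have "Suc k < l" using \<open>k < l\<close> by simp
      then have "e k < e (Suc k)" "e (Suc k) < e l" using sm by (auto simp: strict_mono_less)
      then have "t (e (Suc k)) = 0" using l(2) unfolding PS_mem by auto
      moreover have "Suc k \<le> m" using \<open>Suc k < l\<close> l by simp
      ultimately show False using nzk k by simp
    qed
    then show "(e k, e (Suc k)) \<in> PS t" using l by simp
  qed
qed



theorem mainTheorem3:
  fixes n :: nat and a b :: "nat \<Rightarrow> real" and f :: "real poly"
  assumes apos: "\<And>i. i \<in> {1..n} \<Longrightarrow> a i > 0"
    and bnn: "\<And>i. i \<in> {1..n} \<Longrightarrow> b i \<ge> 0"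
    and amono: "\<And>i j. i \<in> {1..n} \<Longrightarrow> j \<in> {1..n} \<Longrightarrow> i < j \<Longrightarrow> a i < a j"
    and fCMP: "CMP f"
    and finterp: "\<And>i. i \<in> {1..n} \<Longrightarrow> poly f (a i) = b i"
  shows "(dfrak_poly f + 1 \<le> n \<longrightarrow>
            (\<forall>g. CMP g \<and> (\<forall>i\<in>{1..n}. poly g (a i) = b i) \<longrightarrow> g = f))
       \<and> (n \<le> dfrak_poly f \<longrightarrow>
            infinite {g. CMP g \<and> (\<forall>i\<in>{1..n}. poly g (a i) = b i)})"
proof -
  let ?G = "{g. CMP g \<and> (\<forall>i\<in>{1..n}. poly g (a i) = b i)}"
  have ainj: "inj_on a {1..n}"
  proof (rule linorder_inj_onI)
    fix x y assume "x < y" "x \<in> {1..n}" "y \<in> {1..n}"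
    then show "a x \<noteq> a y" using amono[of x y] by auto
  qed auto
  have apos': "\<forall>j\<in>{1..n}. 0 < a j" using apos by auto
  have fK: "finite {i. Sign f i = 1}"
  proof -
    have "{i. Sign f i = 1} \<subseteq> supp (Sign f)" unfolding supp_def by auto
    then show ?thesis using Sign_supp_fin finite_subset by blast
  qed
  have fpos: "\<And>i. coeff f i \<ge> 0" using fCMP unfolding CMP_def by auto
  have P1: "dfrak_poly f + 1 \<le> n \<longrightarrow> (\<forall>g. CMP g \<and> (\<forall>i\<in>{1..n}. poly g (a i) = b i) \<longrightarrow> g = f)"
  proof (intro impI allI)
    fix g assume dn: "dfrak_poly f + 1 \<le> n" and g: "CMP g \<and> (\<forall>i\<in>{1..n}. poly g (a i) = b i)"
    show "g = f"
    proof (rule ccontr)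
      assume "g \<noteq> f"
      define h where "h = f - g"
      have h0: "h \<noteq> 0" using \<open>g \<noteq> f\<close> unfolding h_def by simp
      have "\<forall>j\<in>{1..n}. 0 < a j \<and> poly h (a j) = 0" using g finterp apos unfolding h_def by auto
      then have "n \<le> card (rp h)" using roots_count[OF h0 _ ainj] by blast
      also have "\<dots> \<le> SC (Sign h)" using descartes[OF h0] .
      also have "\<dots> \<le> dfrak (Sign f)"
      proof (rule dfrak_ge[OF fK])
        have "Sign h i \<in> {-1, 0, Sign f i}" for i
        proof (cases "coeff f i > 0")
          case True then show ?thesis using Sign_vals[of h i] unfolding Sign_def by auto
        next
          case False
          then have "coeff f i = 0" using fpos[of i] by simp
          moreover have "coeff g i \<ge> 0" using g unfolding CMP_def by auto
          ultimately show ?thesis unfolding Sign_def h_def by auto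
        qed
        then show "adm (Sign f) (Sign h)" unfolding adm_def using Sign_seq by auto
      qed
      finally show False using dn unfolding dfrak_poly_def by simp
    qed
  qed
  have P2: "n \<le> dfrak_poly f \<longrightarrow> infinite ?G"
  proof
    assume nd: "n \<le> dfrak_poly f"
    obtain h :: "real poly" where h: "h \<noteq> 0" "\<forall>j\<in>{1..n}. poly h (a j) = 0" "\<forall>i. coeff h i < 0 \<longrightarrow> coeff f i > 0"
    proof (cases "n = 0")
      case True
      show ?thesis by (rule that[of 1]) (auto simp: True coeff_1)
    next
      case False
      obtain t where t: "adm (Sign f) t" "SC t = dfrak (Sign f)" using dfrak_attain[OF fK] by blast
      have nt: "n \<le> SC t" using nd t(2) unfolding dfrak_poly_def by simp
      have tseq: "t \<in> sign_seqs" using t(1) unfolding adm_def by simp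
      have tv: "\<And>i. t i \<in> {-1, 0, 1}" using tseq unfolding sign_seqs_def by auto
      have "supp t \<noteq> {}" using supp_ne_SC nt False by simp
      from extract_alt[OF tseq this nt] obtain e where
        e: "strict_mono e" "\<forall>k\<le>n. t (e k) \<noteq> 0" "\<forall>k<n. t (e (Suc k)) = - t (e k)" by blast
      from ker[OF e(1) apos' ainj] obtain h0 :: "real poly" where
        h0: "h0 \<noteq> 0" "\<forall>i. coeff h0 i \<noteq> 0 \<longrightarrow> i \<in> e ` {0..n}" "\<forall>j\<in>{1..n}. poly h0 (a j) = 0" by blast
      have "\<forall>j\<in>{1..n}. 0 < a j \<and> poly h0 (a j) = 0" using h0(3) apos by auto
      then have "n \<le> card (rp h0)" using roots_count[OF h0(1) _ ainj] by blast
      also have "\<dots> \<le> SC (Sign h0)" using descartes[OF h0(1)] .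
      finally have nh: "n \<le> SC (Sign h0)" .
      have su: "supp (Sign h0) \<subseteq> e ` {0..n}" using h0(2) unfolding supp_def Sign_nz by auto
      have al: "\<forall>k<n. (e k, e (Suc k)) \<in> PS (Sign h0)" using alt[OF e(1) Sign_supp_fin su nh] .
      have alt2: "\<And>k. k < n \<Longrightarrow> Sign h0 (e (Suc k)) = - Sign h0 (e k) \<and> Sign h0 (e k) \<noteq> 0"
        using al PS_nz by blast
      define \<sigma> where "\<sigma> = Sign h0 (e 0) * t (e 0)"
      have t01: "t (e 0) = 1 \<or> t (e 0) = -1" using tv[of "e 0"] e(2) by auto
      have sig: "k \<le> n \<Longrightarrow> Sign h0 (e k) = \<sigma> * t (e k)" for k
      proof (induction k)
        case 0 then show ?case unfolding \<sigma>_def using t01 by auto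
      next
        case (Suc k)
        then have "Sign h0 (e (Suc k)) = - Sign h0 (e k)" using alt2 by simp
        also have "\<dots> = \<sigma> * t (e (Suc k))" using Suc e(3) by simp
        finally show ?case .
      qed
      have "Sign h0 (e 0) \<noteq> 0" using alt2[of 0] False by simp
      then have s01: "\<sigma> = 1 \<or> \<sigma> = -1" using Sign_vals[of h0 "e 0"] t01 unfolding \<sigma>_def by auto
      define h where "h = (if \<sigma> = 1 then - h0 else h0)"
      have Sh: "Sign h (e k) = - t (e k)" if "k \<le> n" for k
        using sig[OF that] s01 unfolding h_def by (auto simp: Sign_uminus)
      show ?thesis
      proof (rule that[of h])
        show "h \<noteq> 0" using h0(1) unfolding h_def by simp
        show "\<forall>j\<in>{1..n}. poly h (a j) = 0" using h0(3) unfolding h_def by simp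
        show "\<forall>i. coeff h i < 0 \<longrightarrow> 0 < coeff f i"
        proof (intro allI impI)
          fix i assume neg: "coeff h i < 0"
          then have "coeff h0 i \<noteq> 0" unfolding h_def by (auto split: if_splits)
          then obtain k where k: "k \<le> n" "i = e k" using h0(2) by auto
          have "Sign h i = -1" using neg unfolding Sign_def by simp
          then have "t i = 1" using Sh[OF k(1)] k(2) by simp
          moreover have "t i \<in> {-1, 0, Sign f i}" using t(1) unfolding adm_def by blast
          ultimately have "Sign f i = 1" by auto
          then show "0 < coeff f i" unfolding Sign_def by (auto split: if_splits)
        qed
      qed
    qed
    define E where "E = {i. coeff h i < 0}"
    have fE: "finite E"
    proof -
      have "E \<subseteq> {..degree h}" unfolding E_def using le_degree by force
      then show ?thesis using finite_subset by blast
    qed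
    define A where "A = insert 1 ((\<lambda>i. coeff f i / (- coeff h i)) ` E)"
    define \<epsilon>0 where "\<epsilon>0 = Min A"
    have fA: "finite A" "A \<noteq> {}" using fE unfolding A_def by auto
    have "\<forall>x\<in>A. 0 < x" unfolding A_def E_def using h(3) by (auto simp: divide_pos_neg)
    then have e0: "0 < \<epsilon>0" unfolding \<epsilon>0_def using fA Min_gr_iff by blast
    have bound: "\<epsilon>0 \<le> coeff f i / (- coeff h i)" if "i \<in> E" for i
      unfolding \<epsilon>0_def using fA that unfolding A_def by (intro Min_le) auto
    define \<phi> where "\<phi> = (\<lambda>\<epsilon>. f + smult \<epsilon> h)"
    have sub: "\<phi> ` {0<..<\<epsilon>0} \<subseteq> ?G"
    proof
      fix g assume "g \<in> \<phi> ` {0<..<\<epsilon>0}"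
      then obtain \<epsilon> where eps: "0 < \<epsilon>" "\<epsilon> < \<epsilon>0" "g = f + smult \<epsilon> h" unfolding \<phi>_def by auto
      have "coeff g i \<ge> 0" for i
      proof (cases "coeff h i < 0")
        case True
        then have "\<epsilon> \<le> coeff f i / (- coeff h i)" using bound[of i] eps unfolding E_def by simp
        then have "\<epsilon> * (- coeff h i) \<le> (coeff f i / (- coeff h i)) * (- coeff h i)"
          using True by (intro mult_right_mono) auto
        also have "\<dots> = coeff f i" using True by simp
        finally have "\<epsilon> * (- coeff h i) \<le> coeff f i" .
        then show ?thesis using eps by (simp add: algebra_simps)
      next
        case False
        then show ?thesis using eps fpos[of i] by simp
      qed
      moreover have "\<forall>i\<in>{1..n}. poly g (a i) = b i" using eps h(2) finterp by simp
      ultimately show "g \<in> ?G" unfolding CMP_def by simp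
    qed
    obtain i0 where i0: "coeff h i0 \<noteq> 0" using h(1) by (metis leading_coeff_0_iff)
    have "inj_on \<phi> {0<..<\<epsilon>0}"
    proof (rule inj_onI)
      fix x y assume "\<phi> x = \<phi> y"
      then have "coeff (\<phi> x) i0 = coeff (\<phi> y) i0" by simp
      then have "x * coeff h i0 = y * coeff h i0" unfolding \<phi>_def by simp
      then show "x = y" using i0 by simp
    qed
    moreover have "infinite {0<..<\<epsilon>0}" using e0 by simp
    ultimately have "infinite (\<phi> ` {0<..<\<epsilon>0})" using finite_imageD by blast
    then show "infinite ?G" using sub infinite_super by blast
  qed
  show ?thesis using P1 P2 by blast
qed

end
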